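(* For every weighted digraph $D$ with $w(D)>0$, $\mathrm{mac}(D)\ge l(\theta(D))\cdot w(D)$.
   Context: A weighted digraph $D=(V,A,w)$ is a digraph without loops or parallel arcs (opposite arcs allowed) with weights $w:A\to\mathbb{R}_{\ge0}$; $w(D)$ is the total arc weight. For a partition $(X,Y)$ of $V$, $w(X,Y)$ is the total weight of arcs from $X$ to $Y$, and $\mathrm{mac}(D)=\max_{(X,Y)}w(X,Y)$. For $v\in V$, $r(v)=w^+(v)-w^-(v)$ where $w^+(v)$ ($w^-(v)$) is the total weight of arcs leaving (entering) $v$; $r^+(D)=\sum_{r(x)>0}r(x)$; and $\theta(D)=r^+(D)/w(D)\in[0,1]$. For $0\le\theta\le1$, $l(\theta)=\frac14+\frac{\theta^2}{4(1-2\theta)}$ if $\theta<1/3$ and $l(\theta)=\theta$ if $\theta\ge1/3$. *)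

theory Defs
  imports Complex_Main
begin

definition weighted_digraph :: "'a set \<Rightarrow> ('a \<times> 'a) set \<Rightarrow> ('a \<times> 'a \<Rightarrow> real) \<Rightarrow> bool" where
  "weighted_digraph V A w \<longleftrightarrow> finite V \<and> A \<subseteq> V \<times> V \<and>
     (\<forall>(x, y) \<in> A. x \<noteq> y) \<and> (\<forall>a \<in> A. w a \<ge> 0)"

definition total_weight :: "('a \<times> 'a) set \<Rightarrow> ('a \<times> 'a \<Rightarrow> real) \<Rightarrow> real" where
  "total_weight A w = (\<Sum>a \<in> A. w a)"

definition cut_weight :: "('a \<times> 'a) set \<Rightarrow> ('a \<times> 'a \<Rightarrow> real) \<Rightarrow> 'a set \<Rightarrow> 'a set \<Rightarrow> real" where
  "cut_weight A w X Y = (\<Sum>a \<in> {(x, y) \<in> A. x \<in> X \<and> y \<in> Y}. w a)"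

definition mac :: "'a set \<Rightarrow> ('a \<times> 'a) set \<Rightarrow> ('a \<times> 'a \<Rightarrow> real) \<Rightarrow> real" where
  "mac V A w = Max ((\<lambda>X. cut_weight A w X (V - X)) ` Pow V)"

definition out_weight :: "('a \<times> 'a) set \<Rightarrow> ('a \<times> 'a \<Rightarrow> real) \<Rightarrow> 'a \<Rightarrow> real" where
  "out_weight A w v = (\<Sum>a \<in> {a \<in> A. fst a = v}. w a)"

definition in_weight :: "('a \<times> 'a) set \<Rightarrow> ('a \<times> 'a \<Rightarrow> real) \<Rightarrow> 'a \<Rightarrow> real" where
  "in_weight A w v = (\<Sum>a \<in> {a \<in> A. snd a = v}. w a)"

definition rdiff :: "('a \<times> 'a) set \<Rightarrow> ('a \<times> 'a \<Rightarrow> real) \<Rightarrow> 'a \<Rightarrow> real" where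
  "rdiff A w v = out_weight A w v - in_weight A w v"

definition r_plus :: "'a set \<Rightarrow> ('a \<times> 'a) set \<Rightarrow> ('a \<times> 'a \<Rightarrow> real) \<Rightarrow> real" where
  "r_plus V A w = (\<Sum>v \<in> {v \<in> V. rdiff A w v > 0}. rdiff A w v)"

definition theta :: "'a set \<Rightarrow> ('a \<times> 'a) set \<Rightarrow> ('a \<times> 'a \<Rightarrow> real) \<Rightarrow> real" where
  "theta V A w = r_plus V A w / total_weight A w"

definition lfun :: "real \<Rightarrow> real" where
  "lfun t = (if t < 1/3 then 1/4 + t^2 / (4 * (1 - 2*t)) else t)"

end

theory Submission
  imports Defs
begin

definition Fq :: "('a \<times> 'a) set \<Rightarrow> ('a \<times> 'a \<Rightarrow> real) \<Rightarrow> ('a \<Rightarrow> real) \<Rightarrow> real" where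
  "Fq A w q = (\<Sum>a\<in>A. w a * (q (fst a) * (1 - q (snd a))))"

lemma Fq_affine:
  assumes "\<forall>a\<in>A. fst a \<noteq> snd a"
  shows "Fq A w q = (1 - q x) * Fq A w (q(x:=0)) + q x * Fq A w (q(x:=1))"
  unfolding Fq_def sum_distrib_left sum.distrib[symmetric]
proof (rule sum.cong[OF refl])
  fix a assume "a \<in> A"
  with assms have ne: "fst a \<noteq> snd a" by auto
  show "w a * (q (fst a) * (1 - q (snd a))) =
    (1 - q x) * (w a * ((q(x := 0)) (fst a) * (1 - (q(x := 0)) (snd a)))) +
    q x * (w a * ((q(x := 1)) (fst a) * (1 - (q(x := 1)) (snd a))))"
    using ne by (cases "fst a = x"; cases "snd a = x") (auto simp: algebra_simps)
qed

lemma Fq_round: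
  assumes "finite S" "\<forall>a\<in>A. fst a \<noteq> snd a"
  shows "(\<forall>v. 0 \<le> q v \<and> q v \<le> 1) \<Longrightarrow> (\<forall>v. v \<notin> S \<longrightarrow> q v = 0 \<or> q v = 1) \<Longrightarrow>
     \<exists>q'. (\<forall>v. q' v = 0 \<or> q' v = 1) \<and> Fq A w q \<le> Fq A w q'"
  using assms(1)
proof (induction S arbitrary: q rule: finite_induct)
  case empty
  then show ?case by auto
next
  case (insert x S)
  have h0: "\<exists>q'. (\<forall>v. q' v = 0 \<or> q' v = 1) \<and> Fq A w (q(x:=0)) \<le> Fq A w q'"
    by (rule insert.IH) (use insert.prems in auto)
  have h1: "\<exists>q'. (\<forall>v. q' v = 0 \<or> q' v = 1) \<and> Fq A w (q(x:=1)) \<le> Fq A w q'"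
    by (rule insert.IH) (use insert.prems in auto)
  have aff: "Fq A w q = (1 - q x) * Fq A w (q(x:=0)) + q x * Fq A w (q(x:=1))"
    by (rule Fq_affine[OF assms(2)])
  have qx: "0 \<le> q x" "q x \<le> 1" using insert.prems by auto
  show ?case
  proof (cases "Fq A w (q(x:=0)) \<le> Fq A w (q(x:=1))")
    case True
    have "0 \<le> (1 - q x) * (Fq A w (q(x:=1)) - Fq A w (q(x:=0)))"
      using True qx by simp
    moreover have "(1 - q x) * (Fq A w (q(x:=1)) - Fq A w (q(x:=0))) =
       Fq A w (q(x:=1)) - ((1 - q x) * Fq A w (q(x:=0)) + q x * Fq A w (q(x:=1)))"
      by (simp add: algebra_simps)
    ultimately have le: "Fq A w q \<le> Fq A w (q(x:=1))"
      using aff by linarith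
    from h1 obtain q' where "\<forall>v. q' v = 0 \<or> q' v = 1" "Fq A w (q(x:=1)) \<le> Fq A w q'" by blast
    with le show ?thesis by (meson order_trans)
  next
    case False
    have "0 \<le> q x * (Fq A w (q(x:=0)) - Fq A w (q(x:=1)))"
      using False qx by simp
    moreover have "q x * (Fq A w (q(x:=0)) - Fq A w (q(x:=1))) =
       Fq A w (q(x:=0)) - ((1 - q x) * Fq A w (q(x:=0)) + q x * Fq A w (q(x:=1)))"
      by (simp add: algebra_simps)
    ultimately have le: "Fq A w q \<le> Fq A w (q(x:=0))"
      using aff by linarith
    from h0 obtain q' where "\<forall>v. q' v = 0 \<or> q' v = 1" "Fq A w (q(x:=0)) \<le> Fq A w q'" by blast
    with le show ?thesis by (meson order_trans)
  qed
qed

lemma Fq_cut: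
  assumes "A \<subseteq> V \<times> V" "finite A" "\<forall>v. q v = 0 \<or> q v = 1"
  shows "Fq A w q = cut_weight A w {v\<in>V. q v = 1} (V - {v\<in>V. q v = 1})"
proof -
  let ?X = "{v\<in>V. q v = 1}"
  have e: "{(x, y) \<in> A. x \<in> ?X \<and> y \<in> V - ?X} = {a \<in> A. fst a \<in> ?X \<and> snd a \<in> V - ?X}"
    by auto
  show ?thesis
  unfolding cut_weight_def Fq_def e
  apply (subst sum.inter_filter[OF assms(2)])
  proof (rule sum.cong[OF refl])
    fix a assume a: "a \<in> A"
    then have V: "fst a \<in> V" "snd a \<in> V" using assms(1) by auto
    show "w a * (q (fst a) * (1 - q (snd a))) =
      (if fst a \<in> ?X \<and> snd a \<in> V - ?X then w a else 0)"
      using V assms(3)[rule_format, of "fst a"] assms(3)[rule_format, of "snd a"]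
      by (elim disjE) simp_all
  qed
qed

lemma sum_out:
  assumes "finite A" "finite P"
  shows "(\<Sum>v\<in>P. out_weight A w v) = (\<Sum>a\<in>A. if fst a \<in> P then w a else 0)"
proof -
  have "(\<Sum>v\<in>P. out_weight A w v) = (\<Sum>v\<in>P. \<Sum>a\<in>A. if fst a = v then w a else 0)"
    unfolding out_weight_def using assms by (simp add: sum.inter_filter)
  also have "\<dots> = (\<Sum>a\<in>A. \<Sum>v\<in>P. if fst a = v then w a else 0)"
    by (rule sum.swap)
  also have "\<dots> = (\<Sum>a\<in>A. if fst a \<in> P then w a else 0)"
    using assms by (simp add: sum.delta)
  finally show ?thesis .
qed

lemma sum_in:
  assumes "finite A" "finite P"
  shows "(\<Sum>v\<in>P. in_weight A w v) = (\<Sum>a\<in>A. if snd a \<in> P then w a else 0)"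
proof -
  have "(\<Sum>v\<in>P. in_weight A w v) = (\<Sum>v\<in>P. \<Sum>a\<in>A. if snd a = v then w a else 0)"
    unfolding in_weight_def using assms by (simp add: sum.inter_filter)
  also have "\<dots> = (\<Sum>a\<in>A. \<Sum>v\<in>P. if snd a = v then w a else 0)"
    by (rule sum.swap)
  also have "\<dots> = (\<Sum>a\<in>A. if snd a \<in> P then w a else 0)"
    using assms by (simp add: sum.delta)
  finally show ?thesis .
qed

lemma key:
  assumes wd: "weighted_digraph V A w" and c: "0 \<le> c" "c \<le> 1"
  shows "(total_weight A w - r_plus V A w) * (c * (1 - c)) + r_plus V A w * c^2 \<le> mac V A w"
proof -
  define P where "P = {v\<in>V. rdiff A w v > 0}"
  define q where "q = (\<lambda>v. if v \<in> P then c else if v \<in> V then 1 - c else 0)"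
  define e where "e = (\<lambda>a. (if fst a \<in> P then 1 else 0) - (if snd a \<in> P then 1 else (0::real)))"
  have fV: "finite V" and AV: "A \<subseteq> V \<times> V" and loop: "\<forall>a\<in>A. fst a \<noteq> snd a"
    and wpos: "\<forall>a\<in>A. w a \<ge> 0"
    using wd unfolding weighted_digraph_def by auto
  have fA: "finite A" using fV AV finite_subset by blast
  have fP: "finite P" using fV unfolding P_def by simp
  have R: "r_plus V A w = (\<Sum>a\<in>A. w a * e a)"
  proof -
    have "r_plus V A w = (\<Sum>v\<in>P. out_weight A w v) - (\<Sum>v\<in>P. in_weight A w v)"
      unfolding r_plus_def P_def rdiff_def by (simp add: sum_subtractf)
    also have "\<dots> = (\<Sum>a\<in>A. if fst a \<in> P then w a else 0) - (\<Sum>a\<in>A. if snd a \<in> P then w a else 0)"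
      using sum_out[OF fA fP] sum_in[OF fA fP] by simp
    also have "\<dots> = (\<Sum>a\<in>A. w a * e a)"
      unfolding e_def sum_subtractf[symmetric] by (rule sum.cong) auto
    finally show ?thesis .
  qed
  have "(total_weight A w - r_plus V A w) * (c * (1 - c)) + r_plus V A w * c^2
      = (\<Sum>a\<in>A. w a * ((1 - e a) * (c * (1 - c)) + e a * c^2))"
    unfolding R total_weight_def
    by (simp add: algebra_simps sum.distrib sum_subtractf sum_distrib_left sum_distrib_right)
  also have "\<dots> \<le> Fq A w q"
    unfolding Fq_def
  proof (rule sum_mono)
    fix a assume a: "a \<in> A"
    then have V: "fst a \<in> V" "snd a \<in> V" using AV by auto
    have "(1 - e a) * (c * (1 - c)) + e a * c^2 \<le> q (fst a) * (1 - q (snd a))"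
    proof -
      have sq: "0 \<le> (1 - 2*c)^2" by simp
      show ?thesis using V sq unfolding q_def e_def
        by (cases "fst a \<in> P"; cases "snd a \<in> P") (simp_all add: power2_eq_square algebra_simps)
    qed
    then show "w a * ((1 - e a) * (c * (1 - c)) + e a * c^2) \<le> w a * (q (fst a) * (1 - q (snd a)))"
      using wpos a by (simp add: mult_left_mono)
  qed
  also have p1: "\<forall>v. 0 \<le> q v \<and> q v \<le> 1" using c unfolding q_def by auto
  have p2: "\<forall>v. v \<notin> V \<longrightarrow> q v = 0 \<or> q v = 1" unfolding q_def P_def by auto
  obtain q' where q': "\<forall>v. q' v = 0 \<or> q' v = 1" "Fq A w q \<le> Fq A w q'"
    using Fq_round[OF fV loop p1 p2, of w] by blast
  then have "Fq A w q \<le> Fq A w q'" by simp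
  also have "\<dots> = cut_weight A w {v\<in>V. q' v = 1} (V - {v\<in>V. q' v = 1})"
    by (rule Fq_cut[OF AV fA q'(1)])
  also have "\<dots> \<le> mac V A w"
    unfolding mac_def by (rule Max_ge) (use fV in auto)
  finally show ?thesis .
qed


lemma lfun_identity:
  fixes t :: real assumes "t < 1/3"
  shows "(1 - t) * (((1 - t) / (2 * (1 - 2*t))) * (1 - (1 - t) / (2 * (1 - 2*t))))
         + t * ((1 - t) / (2 * (1 - 2*t)))^2 = 1/4 + t^2 / (4 * (1 - 2*t))"
proof -
  have ne: "1 - 2*t \<noteq> 0" using assms by simp
  define d where "d = 1 - 2*t"
  have dne: "d \<noteq> 0" using ne d_def by simp
  have e1: "1 - (1 - t) / (2*d) = (1 - 3*t) / (2*d)"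
    using dne by (simp add: field_simps d_def)
  have e2: "(1 - t) / (2 * (1 - 2*t)) = (1 - t) / (2*d)" unfolding d_def ..
  have "(1 - t) * (((1 - t) / (2*d)) * ((1 - 3*t) / (2*d))) + t * ((1 - t) / (2*d))^2
        = (1 - t)^2 * ((1 - 3*t) + t) / (4*d^2)"
    using dne by (simp add: field_simps power2_eq_square)
  also have "\<dots> = (1 - t)^2 * d / (4*d^2)"
    unfolding d_def by simp
  also have "\<dots> = (1 - t)^2 / (4*d)"
    using dne by (simp add: field_simps power2_eq_square)
  also have "\<dots> = 1/4 + t^2 / (4 * (1 - 2*t))"
    using dne unfolding d_def by (simp add: field_simps power2_eq_square)
  finally show ?thesis unfolding e2 e1 .
qed

theorem mainTheorem6:
  fixes V :: "'a set" and A :: "('a \<times> 'a) set" and w :: "'a \<times> 'a \<Rightarrow> real"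
  assumes "weighted_digraph V A w"
    and "total_weight A w > 0"
  shows "mac V A w \<ge> lfun (theta V A w) * total_weight A w"
proof -
  define W where "W = total_weight A w"
  define R where "R = r_plus V A w"
  define t where "t = theta V A w"
  have Wp: "W > 0" using assms(2) W_def by simp
  have Rt: "R = t * W" unfolding t_def theta_def R_def W_def using assms(2) by simp
  have R0: "R \<ge> 0" unfolding R_def r_plus_def by (rule sum_nonneg) auto
  have t0: "t \<ge> 0" using R0 Wp Rt by (simp add: zero_le_mult_iff)
  show ?thesis
  proof (cases "t < 1/3")
    case False
    have "(W - R) * (1 * (1 - 1)) + R * 1^2 \<le> mac V A w"
      using key[OF assms(1), of 1] unfolding W_def R_def by simp
    then show ?thesis using False Rt unfolding lfun_def t_def[symmetric] W_def[symmetric]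
      by (simp add: mult.commute)
  next
    case True
    define c where "c = (1 - t) / (2 * (1 - 2*t))"
    have d: "2 * (1 - 2*t) > 0" using True by simp
    have c0: "0 \<le> c" unfolding c_def using True d by simp
    have c1: "c \<le> 1" unfolding c_def using True d by (simp add: divide_le_eq)
    have k: "(W - R) * (c * (1 - c)) + R * c^2 \<le> mac V A w"
      using key[OF assms(1) c0 c1] unfolding W_def R_def .
    have "(W - R) * (c * (1 - c)) + R * c^2
        = W * ((1 - t) * (c * (1 - c)) + t * c^2)" unfolding Rt by (simp add: algebra_simps)
    also have "\<dots> = W * lfun t"
      unfolding c_def lfun_identity[OF True] lfun_def using True by simp
    finally show ?thesis using k unfolding t_def[symmetric] W_def[symmetric]
      by (simp add: mult.commute)
  qed
qed

end
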